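(* Let $n\ge 2$ and let $\mathsf{M}$ be a square submatrix of order $m$ of a matrix in $\mathscr{D}_n$. Then one of the following holds: (i) $|\det\mathsf{M}|\in\{0,1\}$; (ii) there exist an integer $m'\in[m]$ and a matrix $\mathsf{M}'\in\mathscr{D}_{m'}$ such that $|\det\mathsf{M}|=|\det\mathsf{M}'|$.
   Context: Let $e_1,\dots,e_n$ be the standard basis of $\mathbb{R}^n$ and $[\pm n]=\{-n,\dots,-1,1,\dots,n\}$. For $i\in[n-1]$ and $r\in[\pm n]$ with $i<|r|$, set $d(i,r)=e_i+\mathrm{sgn}(r)\,e_{|r|}\in\mathbb{R}^n$. $\mathscr{D}_n$ denotes the set of $n\times n$ real matrices each of whose rows is of the form $d(i,r)$ for some such $i,r$ (rows may repeat). A square submatrix is obtained by deleting some rows and the same number of columns. *)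

theory Defs
  imports "Jordan_Normal_Form.DL_Submatrix" "Jordan_Normal_Form.Determinant"
begin

(* 0-based rendering of d(i,r) = e_i + sgn(r) e_|r| with i < |r| <= n:
   entry 1 at column i, entry s in {1,-1} at column j, where i < j < n. *)
definition d_vec :: "nat \<Rightarrow> nat \<Rightarrow> nat \<Rightarrow> real \<Rightarrow> real vec" where
  "d_vec n i j s = vec n (\<lambda>k. if k = i then 1 else if k = j then s else 0)"

definition is_d_row :: "nat \<Rightarrow> real vec \<Rightarrow> bool" where
  "is_d_row n v \<longleftrightarrow> (\<exists>i j s. i < j \<and> j < n \<and> (s = 1 \<or> s = -1) \<and> v = d_vec n i j s)"

definition in_D :: "nat \<Rightarrow> real mat \<Rightarrow> bool" where
  "in_D n A \<longleftrightarrow> A \<in> carrier_mat n n \<and> (\<forall>k < n. is_d_row n (row A k))"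

end

theory Submission
  imports Defs
begin

definition supp :: "real mat \<Rightarrow> nat \<Rightarrow> nat set" where
  "supp M i = {j. j < dim_col M \<and> M $$ (i,j) \<noteq> 0}"

lemma expand1:
  assumes M: "(M::real mat) \<in> carrier_mat (Suc n) (Suc n)" and i: "i < Suc n" and b: "b < Suc n"
    and z: "\<And>j. j < Suc n \<Longrightarrow> j \<noteq> b \<Longrightarrow> M $$ (i,j) = 0"
  shows "\<bar>det M\<bar> = \<bar>M $$ (i,b)\<bar> * \<bar>det (mat_delete M i b)\<bar>"
proof -
  have "det M = (\<Sum>j<Suc n. M $$ (i,j) * cofactor M i j)" by (rule laplace_expansion_row[OF M i])
  also have "\<dots> = M $$ (i,b) * cofactor M i b"
    by (rule sum.mono_neutral_right[where S="{b}", simplified]) (use b z in auto)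
  finally show ?thesis by (simp add: cofactor_def abs_mult)
qed

lemma delete_entry:
  assumes M: "(M::real mat) \<in> carrier_mat (Suc n) (Suc n)" and i: "i < Suc n" and b: "b < Suc n"
   and "i' < n" "j' < n"
  shows "mat_delete M i b $$ (i',j') = M $$ (insert_index i i', insert_index b j')"
  using mat_delete_index[OF M i b assms(4,5)] by simp

lemma insert_index_lt: "i' < n \<Longrightarrow> insert_index i i' < Suc n"
  unfolding insert_index_def by auto

lemma delete_supp:
  assumes M: "(M::real mat) \<in> carrier_mat (Suc n) (Suc n)" and i: "i < Suc n" and b: "b < Suc n"
   and "i' < n"
  shows "card (supp (mat_delete M i b) i') \<le> card (supp M (insert_index i i') - {b})"
proof -
  have "insert_index b ` supp (mat_delete M i b) i' \<subseteq> supp M (insert_index i i') - {b}"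
    using M i b assms(4) by (auto simp: supp_def delete_entry insert_index_lt)
  moreover have "card (insert_index b ` supp (mat_delete M i b) i') = card (supp (mat_delete M i b) i')"
    by (rule card_image, rule insert_index_inj_on)
  moreover have "finite (supp M (insert_index i i') - {b})" by (simp add: supp_def)
  ultimately show ?thesis by (metis card_mono)
qed


definition good :: "nat \<Rightarrow> real mat \<Rightarrow> bool" where
  "good m M \<longleftrightarrow> M \<in> carrier_mat m m \<and> (\<forall>i<m. \<forall>j<m. M $$ (i,j) \<in> {-1,0,1}) \<and> (\<forall>i<m. card (supp M i) \<le> 2)"

definition Sset :: "nat \<Rightarrow> real \<Rightarrow> bool" where
  "Sset m x \<longleftrightarrow> x = 0 \<or> (\<exists>k. 2*k \<le> m \<and> x = 2^k)"

lemma Sset_mono: "Sset m x \<Longrightarrow> m \<le> m' \<Longrightarrow> Sset m' x"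
  unfolding Sset_def by (elim disjE exE) (auto intro: le_trans)

lemma delete_good:
  assumes g: "good (Suc n) M" and i: "i < Suc n" and b: "b < Suc n"
  shows "good n (mat_delete M i b)"
proof -
  have M: "M \<in> carrier_mat (Suc n) (Suc n)" using g by (simp add: good_def)
  show ?thesis unfolding good_def
  proof (intro conjI allI impI)
    show "mat_delete M i b \<in> carrier_mat n n" using mat_delete_carrier[OF M] by simp
  next
    fix i' j' assume "i' < n" "j' < n"
    then show "mat_delete M i b $$ (i', j') \<in> {- 1, 0, 1}"
      using g by (simp add: delete_entry[OF M i b] good_def insert_index_lt)
  next
    fix i' assume "i' < n"
    have "card (supp M (insert_index i i') - {b}) \<le> card (supp M (insert_index i i'))"
      by (rule card_mono) (auto simp: supp_def)
    moreover have "card (supp M (insert_index i i')) \<le> 2"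
      using g insert_index_lt[OF \<open>i' < n\<close>] unfolding good_def by blast
    ultimately show "card (supp (mat_delete M i b) i') \<le> 2"
      using delete_supp[OF M i b \<open>i' < n\<close>] by linarith
  qed
qed

lemma supp_le1_obtain:
  assumes "card (supp M i) \<le> 1" "0 < dim_col M"
  obtains b where "b < dim_col M" "\<And>j. j < dim_col M \<Longrightarrow> j \<noteq> b \<Longrightarrow> M $$ (i,j) = 0"
proof (cases "supp M i = {}")
  case True
  have "\<And>j. j < dim_col M \<Longrightarrow> M $$ (i,j) = 0"
  proof -
    fix j assume "j < dim_col M"
    show "M $$ (i,j) = 0"
    proof (rule ccontr)
      assume "M $$ (i,j) \<noteq> 0"
      then have "j \<in> supp M i" using \<open>j < dim_col M\<close> by (simp add: supp_def)
      then show False using True by blast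
    qed
  qed
  then show ?thesis using that[of 0] assms(2) by blast
next
  case False
  then obtain x where x: "x \<in> supp M i" by blast
  have fin: "finite (supp M i)" by (simp add: supp_def)
  have all: "\<forall>y\<in>supp M i. y = x" using assms(1) x card_le_Suc0_iff_eq[OF fin] by auto
  have "\<And>j. j < dim_col M \<Longrightarrow> j \<noteq> x \<Longrightarrow> M $$ (i,j) = 0"
  proof -
    fix j assume "j < dim_col M" "j \<noteq> x"
    show "M $$ (i,j) = 0"
    proof (rule ccontr)
      assume "M $$ (i,j) \<noteq> 0"
      then have "j \<in> supp M i" using \<open>j < dim_col M\<close> by (simp add: supp_def)
      then show False using all \<open>j \<noteq> x\<close> by blast
    qed
  qed
  moreover have "x < dim_col M" using x by (simp add: supp_def)
  ultimately show ?thesis using that by blast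
qed

lemma caseA:
  assumes g: "good (Suc q) D" and i: "i < Suc q" and c: "card (supp D i) \<le> 1"
    and IH: "\<And>N. good q N \<Longrightarrow> Sset q \<bar>det N\<bar>"
  shows "Sset q \<bar>det D\<bar>"
proof -
  have D: "D \<in> carrier_mat (Suc q) (Suc q)" using g by (simp add: good_def)
  obtain b where b: "b < Suc q" and z: "\<And>j. j < Suc q \<Longrightarrow> j \<noteq> b \<Longrightarrow> D $$ (i,j) = 0"
    using supp_le1_obtain[OF c] D by auto
  have e: "\<bar>det D\<bar> = \<bar>D $$ (i,b)\<bar> * \<bar>det (mat_delete D i b)\<bar>" by (rule expand1[OF D i b z])
  have "D $$ (i,b) \<in> {-1,0,1}" using g i b by (simp add: good_def)
  then have "\<bar>D $$ (i,b)\<bar> = 0 \<or> \<bar>D $$ (i,b)\<bar> = 1" by auto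
  moreover have "Sset q \<bar>det (mat_delete D i b)\<bar>" by (rule IH[OF delete_good[OF g i b]])
  ultimately show ?thesis
  proof (elim disjE)
    assume "\<bar>D $$ (i,b)\<bar> = 0" then show ?thesis using e by (simp add: Sset_def)
  next
    assume "\<bar>D $$ (i,b)\<bar> = 1" "Sset q \<bar>det (mat_delete D i b)\<bar>"
    then show ?thesis using e by simp
  qed
qed


lemma pm1: "(x::real) \<in> {-1,0,1} \<Longrightarrow> x \<noteq> 0 \<Longrightarrow> x = 1 \<or> x = -1" by auto

lemma good_carrier: "good n M \<Longrightarrow> M \<in> carrier_mat n n" by (simp add: good_def)
lemma good_entry: "good n M \<Longrightarrow> i < n \<Longrightarrow> j < n \<Longrightarrow> M $$ (i,j) \<in> {-1,0,1}" by (simp add: good_def)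
lemma good_card: "good n M \<Longrightarrow> i < n \<Longrightarrow> card (supp M i) \<le> 2" by (simp add: good_def)

lemma supp_iff: "M \<in> carrier_mat n n \<Longrightarrow> j \<in> supp M i \<longleftrightarrow> j < n \<and> M $$ (i,j) \<noteq> 0"
  by (simp add: supp_def)

lemma B1:
  assumes g: "good (Suc p) M" and two: "\<forall>i<Suc p. card (supp M i) = 2"
    and r: "r < Suc p" and r': "r' < Suc p" and rr: "r \<noteq> r'" and eqs: "supp M r = supp M r'"
    and IH: "\<And>q N. q < Suc p \<Longrightarrow> good q N \<Longrightarrow> Sset q \<bar>det N\<bar>"
  shows "Sset (Suc p) \<bar>det M\<bar>"
proof -
  have Mc: "M \<in> carrier_mat (Suc p) (Suc p)" using g by (rule good_carrier)
  obtain a b where ab: "a \<noteq> b" and sab: "supp M r = {a,b}" using two r by (meson card_2_iff)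
  have a: "a < Suc p" and b: "b < Suc p" using sab supp_iff[OF Mc] by blast+
  have nz: "M $$ (r,a) \<noteq> 0" "M $$ (r,b) \<noteq> 0" "M $$ (r',a) \<noteq> 0" "M $$ (r',b) \<noteq> 0"
    using sab eqs supp_iff[OF Mc] by blast+
  have zr: "\<And>j. j < Suc p \<Longrightarrow> j \<noteq> a \<Longrightarrow> j \<noteq> b \<Longrightarrow> M $$ (r,j) = 0 \<and> M $$ (r',j) = 0"
    using sab eqs supp_iff[OF Mc] by blast
  have v: "M $$ (r,a) = 1 \<or> M $$ (r,a) = -1" "M $$ (r,b) = 1 \<or> M $$ (r,b) = -1"
     "M $$ (r',a) = 1 \<or> M $$ (r',a) = -1" "M $$ (r',b) = 1 \<or> M $$ (r',b) = -1"
    using pm1 good_entry[OF g] nz r r' a b by blast+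
  define c where "c = - (M $$ (r',a) / M $$ (r,a))"
  define M' where "M' = addrow c r' r M"
  have M'c: "M' \<in> carrier_mat (Suc p) (Suc p)" using Mc by (simp add: M'_def)
  have detM: "det M' = det M" unfolding M'_def by (rule det_addrow[OF r rr[symmetric] Mc])
  have M'e: "\<And>j. j < Suc p \<Longrightarrow> M' $$ (r',j) = c * M $$ (r,j) + M $$ (r',j)"
    using Mc r' by (simp add: M'_def)
  have z: "\<And>j. j < Suc p \<Longrightarrow> j \<noteq> b \<Longrightarrow> M' $$ (r',j) = 0"
  proof -
    fix j assume j: "j < Suc p" "j \<noteq> b"
    show "M' $$ (r',j) = 0"
    proof (cases "j = a")
      case True then show ?thesis using M'e[OF j(1)] nz(1) by (simp add: c_def)
    next
      case False then show ?thesis using M'e[OF j(1)] zr[OF j(1) False j(2)] by simp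
    qed
  qed
  have vb: "\<bar>M' $$ (r',b)\<bar> = 0 \<or> \<bar>M' $$ (r',b)\<bar> = 2"
    using M'e[OF b] v unfolding c_def by (elim disjE) simp_all
  have e: "\<bar>det M\<bar> = \<bar>M' $$ (r',b)\<bar> * \<bar>det (mat_delete M' r' b)\<bar>"
    using expand1[OF M'c r' b z] detM by simp
  have Deq: "mat_delete M' r' b = mat_delete M r' b"
  proof (rule eq_matI)
    fix i j assume "i < dim_row (mat_delete M r' b)" "j < dim_col (mat_delete M r' b)"
    then have ij: "i < p" "j < p" using Mc by auto
    have ne: "r' \<noteq> insert_index r' i" by (metis insert_index_exclude)
    then show "mat_delete M' r' b $$ (i, j) = mat_delete M r' b $$ (i, j)"
      using delete_entry[OF M'c r' b ij] delete_entry[OF Mc r' b ij] Mc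
        insert_index_lt[OF ij(1)] insert_index_lt[OF ij(2)]
      by (simp add: M'_def ne)
  qed (use Mc M'c in auto)
  define D where "D = mat_delete M r' b"
  have gD: "good p D" unfolding D_def by (rule delete_good[OF g r' b])
  define i0 where "i0 = delete_index r' r"
  have i0: "i0 < p" using r r' rr unfolding i0_def delete_index_def by auto
  have ii0: "insert_index r' i0 = r" unfolding i0_def by (rule insert_delete_index[OF rr])
  have "card (supp D i0) \<le> card (supp M r - {b})"
    using delete_supp[OF Mc r' b i0] ii0 unfolding D_def by simp
  also have "supp M r - {b} = {a}" using sab ab by auto
  finally have c1: "card (supp D i0) \<le> 1" by simp
  obtain q where pq: "p = Suc q" using i0 by (cases p) auto
  have SD: "Sset q \<bar>det D\<bar>"
    by (rule caseA[OF gD[unfolded pq] i0[unfolded pq] c1]) (rule IH, use pq in auto)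
  have e2: "\<bar>det M\<bar> = \<bar>M' $$ (r',b)\<bar> * \<bar>det D\<bar>" using e Deq D_def by simp
  from vb show ?thesis
  proof
    assume "\<bar>M' $$ (r',b)\<bar> = 0" then show ?thesis using e2 by (simp add: Sset_def)
  next
    assume h: "\<bar>M' $$ (r',b)\<bar> = 2"
    from SD[unfolded Sset_def] show ?thesis
    proof (elim disjE exE conjE)
      assume "\<bar>det D\<bar> = 0" then show ?thesis using e2 by (simp add: Sset_def)
    next
      fix k assume "2*k \<le> q" "\<bar>det D\<bar> = 2^k"
      then have "2 * Suc k \<le> Suc p" "\<bar>det M\<bar> = 2 ^ Suc k" using e2 h pq by auto
      then show ?thesis unfolding Sset_def by blast
    qed
  qed
qed


lemma B2:
  assumes g: "good (Suc p) M" and two: "\<forall>i<Suc p. card (supp M i) = 2"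
    and dist: "\<forall>r<Suc p. \<forall>r'<Suc p. r \<noteq> r' \<longrightarrow> supp M r \<noteq> supp M r'"
    and IH: "\<And>N. good p N \<Longrightarrow> Sset p \<bar>det N\<bar>"
  shows "Sset (Suc p) \<bar>det M\<bar>"
proof -
  have Mc: "M \<in> carrier_mat (Suc p) (Suc p)" using g by (rule good_carrier)
  obtain a b where ab: "a \<noteq> b" and sab: "supp M 0 = {a,b}" using two by (meson card_2_iff zero_less_Suc)
  have a: "a < Suc p" and b: "b < Suc p" using sab supp_iff[OF Mc] by blast+
  have nz: "M $$ (0,a) \<noteq> 0" "M $$ (0,b) \<noteq> 0"
    using sab supp_iff[OF Mc] by blast+
  have zr: "\<And>j. j < Suc p \<Longrightarrow> j \<noteq> a \<Longrightarrow> j \<noteq> b \<Longrightarrow> M $$ (0,j) = 0"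
    using sab supp_iff[OF Mc] by blast
  have v: "M $$ (0,a) = 1 \<or> M $$ (0,a) = -1" "M $$ (0,b) = 1 \<or> M $$ (0,b) = -1"
    using pm1 good_entry[OF g] nz a b by blast+
  define c where "c = - (M $$ (0,a) / M $$ (0,b))"
  have cv: "c = 1 \<or> c = -1" using v unfolding c_def by (elim disjE) simp_all
  define M' where "M' = addcol c a b M"
  have M'c: "M' \<in> carrier_mat (Suc p) (Suc p)" using Mc unfolding M'_def by (intro carrier_matI) auto
  have detM: "det M' = det M" unfolding M'_def by (rule det_addcol[OF b ab Mc])
  have M'e: "\<And>i j. i < Suc p \<Longrightarrow> j < Suc p \<Longrightarrow> M' $$ (i,j) = (if j = a then c * M $$ (i,b) + M $$ (i,j) else M $$ (i,j))"
    using Mc by (auto simp: M'_def)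
  have z: "\<And>j. j < Suc p \<Longrightarrow> j \<noteq> b \<Longrightarrow> M' $$ (0,j) = 0"
  proof -
    fix j assume j: "j < Suc p" "j \<noteq> b"
    show "M' $$ (0,j) = 0"
    proof (cases "j = a")
      case True then show ?thesis using M'e[OF _ j(1)] nz(2) by (simp add: c_def)
    next
      case False then show ?thesis using M'e[OF _ j(1)] zr[OF j(1) False j(2)] by simp
    qed
  qed
  have vb: "\<bar>M' $$ (0,b)\<bar> = 1" using M'e[OF _ b] ab v by auto
  define D where "D = mat_delete M' 0 b"
  have e: "\<bar>det M\<bar> = \<bar>det D\<bar>"
    using expand1[OF M'c _ b z] detM vb D_def by simp
  have key: "\<And>i. i < Suc p \<Longrightarrow> i \<noteq> 0 \<Longrightarrow> M $$ (i,b) \<noteq> 0 \<Longrightarrow> M $$ (i,a) = 0"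
  proof (rule ccontr)
    fix i assume i: "i < Suc p" "i \<noteq> 0" "M $$ (i,b) \<noteq> 0" "M $$ (i,a) \<noteq> 0"
    have sub: "{a,b} \<subseteq> supp M i" using i a b supp_iff[OF Mc] by blast
    have "card {a,b} = card (supp M i)" using two i ab by simp
    then have "{a,b} = supp M i" using sub by (intro card_subset_eq) (auto simp: supp_def)
    then show False using dist i sab by (metis zero_less_Suc)
  qed
  have gD: "good p D" unfolding good_def
  proof (intro conjI allI impI)
    show "D \<in> carrier_mat p p" using mat_delete_carrier[OF M'c] by (simp add: D_def)
  next
    fix i' j' assume ij: "i' < p" "j' < p"
    define i where "i = insert_index 0 i'"
    define j where "j = insert_index b j'"
    have i: "i < Suc p" "i \<noteq> 0" using ij insert_index_lt unfolding i_def by (auto simp: insert_index_def)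
    have j: "j < Suc p" using ij insert_index_lt unfolding j_def by auto
    have De: "D $$ (i',j') = M' $$ (i,j)" unfolding D_def i_def j_def by (rule delete_entry[OF M'c _ b ij]) simp
    have ea: "M $$ (i,a) \<in> {-1,0,1}" "M $$ (i,b) \<in> {-1,0,1}" "M $$ (i,j) \<in> {-1,0,1}"
      using good_entry[OF g] i a b j by blast+
    show "D $$ (i', j') \<in> {- 1, 0, 1}"
    proof (cases "j = a")
      case False then show ?thesis using De M'e[OF i(1) j] ea by simp
    next
      case True
      show ?thesis
      proof (cases "M $$ (i,b) = 0")
        case True then show ?thesis using De M'e[OF i(1) j] ea \<open>j = a\<close> by simp
      next
        case False
        then have "M $$ (i,a) = 0" using key i by blast
        then show ?thesis using De M'e[OF i(1) j] ea \<open>j = a\<close> cv by auto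
      qed
    qed
  next
    fix i' assume i': "i' < p"
    define i where "i = insert_index 0 i'"
    have i: "i < Suc p" "i \<noteq> 0" using i' insert_index_lt unfolding i_def by (auto simp: insert_index_def)
    have cs: "card (supp D i') \<le> card (supp M' i - {b})"
      unfolding D_def i_def by (rule delete_supp[OF M'c _ b i']) simp
    have fin: "finite (supp M i)" by (simp add: supp_def)
    have "card (supp M' i - {b}) \<le> 2"
    proof (cases "M $$ (i,b) = 0")
      case True
      have "supp M' i - {b} \<subseteq> supp M i" using M'e[OF i(1)] True supp_iff[OF Mc] supp_iff[OF M'c] by (auto split: if_splits)
      then have "card (supp M' i - {b}) \<le> card (supp M i)" using fin by (rule card_mono[rotated])
      then show ?thesis using two i by simp
    next
      case False
      have bi: "b \<in> supp M i" using False b supp_iff[OF Mc] by blast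
      have "supp M' i - {b} \<subseteq> insert a (supp M i - {b})"
        using M'e[OF i(1)] supp_iff[OF Mc] supp_iff[OF M'c] by auto
      then have "card (supp M' i - {b}) \<le> card (insert a (supp M i - {b}))"
        using fin by (intro card_mono) auto
      also have "\<dots> \<le> Suc (card (supp M i - {b}))" using fin by (simp add: card_insert_if)
      also have "card (supp M i - {b}) = 1" using two i bi fin by simp
      finally show ?thesis by simp
    qed
    then show "card (supp D i') \<le> 2" using cs by linarith
  qed
  show ?thesis using IH[OF gD] e Sset_mono[of p _ "Suc p"] by simp
qed


lemma main_good: "good n M \<Longrightarrow> Sset n \<bar>det M\<bar>"
proof (induction n arbitrary: M rule: less_induct)
  case (less n)
  have Mc: "M \<in> carrier_mat n n" using less.prems by (rule good_carrier)
  show ?case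
  proof (cases n)
    case 0
    then have "det M = 1" using Mc by simp
    then show ?thesis unfolding Sset_def by (intro disjI2 exI[of _ 0]) simp
  next
    case (Suc p)
    have g: "good (Suc p) M" using less.prems Suc by simp
    show ?thesis
    proof (cases "\<exists>i<Suc p. card (supp M i) \<le> 1")
      case True
      then obtain i where i: "i < Suc p" "card (supp M i) \<le> 1" by blast
      have "Sset p \<bar>det M\<bar>" by (rule caseA[OF g i]) (rule less.IH, use Suc in auto)
      then show ?thesis using Suc Sset_mono by auto
    next
      case False
      have two: "\<forall>i<Suc p. card (supp M i) = 2" using False good_card[OF g] by force
      show ?thesis
      proof (cases "\<exists>r<Suc p. \<exists>r'<Suc p. r \<noteq> r' \<and> supp M r = supp M r'")
        case True
        then obtain r r' where "r < Suc p" "r' < Suc p" "r \<noteq> r'" "supp M r = supp M r'" by blast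
        from B1[OF g two this] less.IH Suc show ?thesis by auto
      next
        case False
        then have d: "\<forall>r<Suc p. \<forall>r'<Suc p. r \<noteq> r' \<longrightarrow> supp M r \<noteq> supp M r'" by blast
        from B2[OF g two d] less.IH Suc show ?thesis by auto
      qed
    qed
  qed
qed

definition blk :: "nat \<Rightarrow> real mat" where
  "blk k = mat (2*k) (2*k) (\<lambda>(i,j). if i div 2 = j div 2 then (if odd i \<and> odd j then -1 else 1) else 0)"

lemma blk_carrier: "blk k \<in> carrier_mat (2*k) (2*k)" by (simp add: blk_def)

lemma blk_Suc: "blk (Suc k) = four_block_mat (blk 1) (0\<^sub>m 2 (2*k)) (0\<^sub>m (2*k) 2) (blk k)"
proof (rule eq_matI)
  fix i j assume "i < dim_row (four_block_mat (blk 1) (0\<^sub>m 2 (2*k)) (0\<^sub>m (2*k) 2) (blk k))"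
    "j < dim_col (four_block_mat (blk 1) (0\<^sub>m 2 (2*k)) (0\<^sub>m (2*k) 2) (blk k))"
  then have ij: "i < 2 + 2*k" "j < 2 + 2*k" by (simp_all add: blk_def)
  show "blk (Suc k) $$ (i, j) = four_block_mat (blk 1) (0\<^sub>m 2 (2*k)) (0\<^sub>m (2*k) 2) (blk k) $$ (i, j)"
  proof (cases "i < 2")
    case True
    then show ?thesis using ij by (cases "j < 2") (auto simp: blk_def)
  next
    case False
    then obtain i' where i': "i = i' + 2" by (metis add.commute le_Suc_ex not_less)
    show ?thesis
    proof (cases "j < 2")
      case True then show ?thesis using ij i' by (auto simp: blk_def)
    next
      case False
      then obtain j' where j': "j = j' + 2" by (metis add.commute le_Suc_ex not_less)
      show ?thesis using ij i' j' by (auto simp: blk_def)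
    qed
  qed
qed (auto simp: blk_def)

lemma det_blk1: "det (blk 1) = -2"
proof -
  have c: "blk 1 \<in> carrier_mat 2 2" using blk_carrier[of 1] by simp
  have "det (blk 1) = (\<Sum>j<2. blk 1 $$ (0,j) * cofactor (blk 1) 0 j)"
    by (rule laplace_expansion_row[OF c]) simp
  also have "\<dots> = blk 1 $$ (0,0) * cofactor (blk 1) 0 0 + blk 1 $$ (0,1) * cofactor (blk 1) 0 1"
    by (simp add: numeral_2_eq_2)
  also have "cofactor (blk 1) 0 0 = -1"
    unfolding cofactor_def by (subst det_single) (auto simp: mat_delete_def blk_def)
  also have "cofactor (blk 1) 0 1 = -1"
    unfolding cofactor_def by (subst det_single) (auto simp: mat_delete_def blk_def)
  finally show ?thesis by (simp add: blk_def)
qed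

lemma det_blk: "\<bar>det (blk k)\<bar> = 2^k"
proof (induction k)
  case 0 then show ?case using blk_carrier[of 0] by simp
next
  case (Suc k)
  have "det (blk (Suc k)) = det (blk 1) * det (blk k)"
    unfolding blk_Suc
    by (rule det_four_block_mat_lower_left_zero[of _ 2 _ "2*k"]) (use blk_carrier[of 1] blk_carrier[of k] in auto)
  then show ?case using Suc det_blk1 by (simp add: abs_mult)
qed

lemma even_div: "even (x::nat) \<Longrightarrow> (y div 2 = x div 2) = (y = x \<or> y = Suc x)" by presburger
lemma odd_div: "odd (x::nat) \<Longrightarrow> (y div 2 = x div 2) = (y = x \<or> Suc y = x)" by presburger

lemma blk_inD: "in_D (2*k) (blk k)"
  unfolding in_D_def
proof (intro conjI allI impI)
  show "blk k \<in> carrier_mat (2*k) (2*k)" by (rule blk_carrier)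
next
  fix x assume x: "x < 2*k"
  show "is_d_row (2*k) (row (blk k) x)"
  proof (cases "even x")
    case True
    have "Suc x < 2*k" using x True by presburger
    moreover have "row (blk k) x = d_vec (2*k) x (Suc x) 1"
      by (rule eq_vecI) (use x True in \<open>auto simp: blk_def d_vec_def even_div\<close>)
    ultimately show ?thesis unfolding is_d_row_def by blast
  next
    case False
    have x0: "0 < x" using False by presburger
    have "x - 1 < x" using False by presburger
    moreover have "row (blk k) x = d_vec (2*k) (x-1) x (-1)"
      by (rule eq_vecI) (use x False x0 in \<open>auto simp: blk_def d_vec_def odd_div\<close>)
    ultimately show ?thesis unfolding is_d_row_def using x by blast
  qed
qed


lemma Aentry:
  assumes D: "in_D n A" and x: "x < n"
  shows "\<exists>i0 j0 s. (s = 1 \<or> s = -1) \<and> (\<forall>y<n. A $$ (x,y) = (if y = i0 then 1 else if y = j0 then s else 0))"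
proof -
  have Ac: "A \<in> carrier_mat n n" and r: "is_d_row n (row A x)" using D x by (auto simp: in_D_def)
  then obtain i0 j0 s where s: "s = 1 \<or> s = -1" and rw: "row A x = d_vec n i0 j0 s"
    unfolding is_d_row_def by blast
  have "\<forall>y<n. A $$ (x,y) = (if y = i0 then 1 else if y = j0 then s else 0)"
  proof (intro allI impI)
    fix y assume y: "y < n"
    have "A $$ (x,y) = row A x $ y" using Ac x y by simp
    then show "A $$ (x,y) = (if y = i0 then 1 else if y = j0 then s else 0)"
      using rw y by (simp add: d_vec_def)
  qed
  then show ?thesis using s by blast
qed

lemma pick_inj: "inj_on (pick J) {..<card J}"
proof (rule inj_onI)
  fix x y assume "x \<in> {..<card J}" "y \<in> {..<card J}" "pick J x = pick J y"
  then show "x = y" using pick_mono[of y J x] pick_mono[of x J y]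
    by (metis lessThan_iff linorder_neqE_nat less_irrefl)
qed

lemma sub_good:
  assumes D: "in_D n A" and I: "I \<subseteq> {..<n}" and J: "J \<subseteq> {..<n}" and cIJ: "card I = card J"
  shows "good (card I) (submatrix A I J)"
proof -
  have Ac: "A \<in> carrier_mat n n" using D by (simp add: in_D_def)
  have eI: "{i. i < dim_row A \<and> i \<in> I} = I" using I Ac by auto
  have eJ: "{i. i < dim_col A \<and> i \<in> J} = J" using J Ac by auto
  let ?M = "submatrix A I J"
  have r1: "dim_row ?M = card I" by (simp only: dim_submatrix eI)
  have r2: "dim_col ?M = card I" by (simp only: dim_submatrix eJ cIJ)
  have Mc: "?M \<in> carrier_mat (card I) (card I)" using r1 r2 by (rule carrier_matI)
  have ent: "\<And>i j. i < card I \<Longrightarrow> j < card I \<Longrightarrow> ?M $$ (i,j) = A $$ (pick I i, pick J j)"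
  proof -
    fix i j assume "i < card I" "j < card I"
    then show "?M $$ (i,j) = A $$ (pick I i, pick J j)"
      by (intro submatrix_index) (simp_all only: eI eJ cIJ)
  qed
  have pI: "\<And>i. i < card I \<Longrightarrow> pick I i < n"
  proof -
    fix i assume "i < card I"
    then have "pick I i \<in> I" by (intro pick_in_set) simp
    then show "pick I i < n" using I by blast
  qed
  have pJ: "\<And>j. j < card I \<Longrightarrow> pick J j < n"
  proof -
    fix i assume "i < card I"
    then have "pick J i \<in> J" using cIJ by (intro pick_in_set) simp
    then show "pick J i < n" using J by blast
  qed
  show ?thesis unfolding good_def
  proof (intro conjI allI impI Mc)
    fix i j assume ij: "i < card I" "j < card I"
    obtain i0 j0 s where s: "s = 1 \<or> s = -1" and e: "\<forall>y<n. A $$ (pick I i,y) = (if y = i0 then 1 else if y = j0 then s else 0)"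
      using Aentry[OF D pI[OF ij(1)]] by blast
    show "?M $$ (i,j) \<in> {-1,0,1}" using ent[OF ij] e pJ[OF ij(2)] s by auto
  next
    fix i assume i: "i < card I"
    obtain i0 j0 s where s: "s = 1 \<or> s = -1" and e: "\<forall>y<n. A $$ (pick I i,y) = (if y = i0 then 1 else if y = j0 then s else 0)"
      using Aentry[OF D pI[OF i]] by blast
    have sub: "pick J ` supp ?M i \<subseteq> {i0, j0}"
    proof
      fix y assume "y \<in> pick J ` supp ?M i"
      then obtain j where j: "j \<in> supp ?M i" "y = pick J j" by blast
      then have jl: "j < card I" "?M $$ (i,j) \<noteq> 0" using supp_iff[OF Mc] by auto
      then show "y \<in> {i0, j0}" using ent[OF i jl(1)] e pJ[OF jl(1)] j(2) by (auto split: if_splits)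
    qed
    have inj: "inj_on (pick J) (supp ?M i)"
      by (rule inj_on_subset[OF pick_inj]) (use supp_iff[OF Mc] cIJ in auto)
    have "card (supp ?M i) \<le> card {i0, j0}" by (rule card_inj_on_le[OF inj sub]) simp
    also have "\<dots> \<le> 2" by (simp add: card_insert_if)
    finally show "card (supp ?M i) \<le> 2" .
  qed
qed

theorem mainTheorem3:
  fixes n :: nat and A :: "real mat" and I J :: "nat set"
  assumes "n \<ge> 2" and "in_D n A"
    and "I \<subseteq> {..<n}" and "J \<subseteq> {..<n}" and "card I = card J"
  shows "\<bar>det (submatrix A I J)\<bar> \<in> {0, 1} \<or>
         (\<exists>m' M'. 1 \<le> m' \<and> m' \<le> card I \<and> in_D m' M' \<and>
                   \<bar>det (submatrix A I J)\<bar> = \<bar>det M'\<bar>)"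
proof -
  have "Sset (card I) \<bar>det (submatrix A I J)\<bar>"
    by (rule main_good[OF sub_good[OF assms(2-5)]])
  then consider "\<bar>det (submatrix A I J)\<bar> = 0" | k where "2*k \<le> card I" "\<bar>det (submatrix A I J)\<bar> = 2^k"
    unfolding Sset_def by blast
  then show ?thesis
  proof cases
    case 1 then show ?thesis by simp
  next
    case (2 k)
    show ?thesis
    proof (cases "k = 0")
      case True then show ?thesis using 2 by simp
    next
      case False
      then have "1 \<le> 2*k" by simp
      then show ?thesis using 2 blk_inD[of k] det_blk[of k] by metis
    qed
  qed
qed

end
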